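(* Let $p\in(0,1)$ and $N=1/(1-p)$. For integers $s\ge0$ and $r\ge0$, $$F_s(r)\le p^{r/2}\,N^s\,4^s .$$
   Context: For $L\in\mathbb N$ and $j\in\mathbb Z$ define the chain functions $F_0(j)=p^{|j|}$ and, for $L\ge1$, $$F_L(j)=\sum_{j_1,\dots,j_L\in\mathbb Z}p^{|j-j_1|+|j_1-j_2|+\cdots+|j_{L-1}-j_L|+|j_L|}.$$ *)

theory Defs
  imports "HOL-Analysis.Analysis"
begin

fun chain_exp :: "int \<Rightarrow> int list \<Rightarrow> int" where
  "chain_exp j [] = \<bar>j\<bar>"
| "chain_exp j (x # xs) = \<bar>j - x\<bar> + chain_exp x xs"

definition chainF :: "real \<Rightarrow> nat \<Rightarrow> int \<Rightarrow> real" where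
  "chainF p L j = (\<Sum>\<^sub>\<infinity> xs \<in> {xs :: int list. length xs = L}. p ^ nat (chain_exp j xs))"

end

theory Submission
  imports Defs
begin

lemma geo_fin_nat:
  fixes q :: real assumes "0 \<le> q" "q < 1" "finite K"
  shows "(\<Sum>k\<in>K. q ^ k) \<le> 1 / (1 - q)"
proof -
  have "(\<Sum>k\<in>K. q ^ k) \<le> (\<Sum>k. q ^ k)"
    by (rule sum_le_suminf) (use assms in \<open>auto intro: summable_geometric\<close>)
  also have "\<dots> = 1 / (1 - q)" using suminf_geometric[of q] assms by simp
  finally show ?thesis .
qed

lemma geo_fin_int:
  fixes q :: real assumes q: "0 \<le> q" "q < 1" and X: "finite X"
  shows "(\<Sum>x\<in>X. q ^ nat \<bar>j - x\<bar>) \<le> (1 + q) / (1 - q)"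
proof -
  let ?A = "{x\<in>X. j \<le> x}" and ?B = "{x\<in>X. x < j}"
  have split: "(\<Sum>x\<in>X. q ^ nat \<bar>j - x\<bar>) = (\<Sum>x\<in>?A. q ^ nat \<bar>j - x\<bar>) + (\<Sum>x\<in>?B. q ^ nat \<bar>j - x\<bar>)"
    using X by (subst sum.union_disjoint[symmetric]) (auto intro: sum.cong)
  have injA: "inj_on (\<lambda>x. nat (x - j)) ?A" by (auto simp: inj_on_def)
  have "(\<Sum>x\<in>?A. q ^ nat \<bar>j - x\<bar>) = (\<Sum>x\<in>?A. q ^ nat (x - j))"
    by (rule sum.cong) auto
  also have "\<dots> = (\<Sum>k\<in>(\<lambda>x. nat (x - j)) ` ?A. q ^ k)"
    using sum.reindex[OF injA, of "\<lambda>k. q ^ k"] by simp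
  also have "\<dots> \<le> 1 / (1 - q)" using q X by (intro geo_fin_nat) auto
  finally have A: "(\<Sum>x\<in>?A. q ^ nat \<bar>j - x\<bar>) \<le> 1 / (1 - q)" .
  have injB: "inj_on (\<lambda>x. nat (j - x - 1)) ?B" by (auto simp: inj_on_def)
  have "(\<Sum>x\<in>?B. q ^ nat \<bar>j - x\<bar>) = (\<Sum>x\<in>?B. q * q ^ nat (j - x - 1))"
  proof (rule sum.cong)
    fix x assume "x \<in> ?B"
    then have "nat \<bar>j - x\<bar> = Suc (nat (j - x - 1))" by auto
    then show "q ^ nat \<bar>j - x\<bar> = q * q ^ nat (j - x - 1)" by simp
  qed simp
  also have "\<dots> = q * (\<Sum>k\<in>(\<lambda>x. nat (j - x - 1)) ` ?B. q ^ k)"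
    using sum.reindex[OF injB, of "\<lambda>k. q ^ k"] by (simp add: sum_distrib_left)
  also have "\<dots> \<le> q * (1 / (1 - q))" using q X by (intro mult_left_mono geo_fin_nat) auto
  finally have B: "(\<Sum>x\<in>?B. q ^ nat \<bar>j - x\<bar>) \<le> q * (1 / (1 - q))" .
  have "1 / (1 - q) + q * (1 / (1 - q)) = (1 + q) / (1 - q)" using q by (simp add: field_simps)
  with A B split show ?thesis by linarith
qed

lemma chain_exp_nonneg: "0 \<le> chain_exp j xs"
  by (induction xs arbitrary: j) auto

lemma chain_exp_ge: "\<bar>j\<bar> \<le> chain_exp j xs"
proof (induction xs arbitrary: j)
  case Nil
  then show ?case by simp
next
  case (Cons a xs)
  have "\<bar>a\<bar> \<le> chain_exp a xs" by (rule Cons.IH)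
  then show ?case by simp
qed

lemma fin_bound:
  fixes q :: real assumes q: "0 \<le> q" "q < 1"
  shows "finite F \<Longrightarrow> F \<subseteq> {xs. length xs = s} \<Longrightarrow>
    (\<Sum>xs\<in>F. q ^ nat (chain_exp j xs)) \<le> ((1 + q) / (1 - q)) ^ s"
proof (induction s arbitrary: F j)
  case 0
  then have "F \<subseteq> {[]}" by auto
  then have "F = {} \<or> F = {[]}" by auto
  then show ?case using q by (auto simp: power_le_one)
next
  case (Suc s)
  let ?C = "(1 + q) / (1 - q)"
  let ?T = "hd ` F"
  let ?G = "\<lambda>x. {ys. x # ys \<in> F}"
  have fT: "finite ?T" using Suc by auto
  have "(\<Sum>xs\<in>F. q ^ nat (chain_exp j xs)) = (\<Sum>x\<in>?T. \<Sum>xs\<in>{xs\<in>F. hd xs = x}. q ^ nat (chain_exp j xs))"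
    using sum.group[OF Suc.prems(1) fT, of hd "\<lambda>xs. q ^ nat (chain_exp j xs)"] by simp
  also have "\<dots> \<le> (\<Sum>x\<in>?T. q ^ nat \<bar>j - x\<bar> * ?C ^ s)"
  proof (rule sum_mono)
    fix x assume "x \<in> ?T"
    have eq: "{xs\<in>F. hd xs = x} = (Cons x) ` ?G x"
    proof
      show "{xs\<in>F. hd xs = x} \<subseteq> (Cons x) ` ?G x"
      proof
        fix xs assume xs: "xs \<in> {xs\<in>F. hd xs = x}"
        then have "xs \<noteq> []" using Suc.prems(2) by auto
        then have "xs = x # tl xs" using xs by (cases xs) auto
        then show "xs \<in> (Cons x) ` ?G x" using xs by (metis (mono_tags, lifting) image_eqI mem_Collect_eq)
      qed
    qed auto
    have "?G x = Cons x -` F" by auto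
    moreover have "inj (Cons x)" by (auto simp: inj_def)
    ultimately have fG: "finite (?G x)" using Suc.prems(1) finite_vimageI by metis
    have sG: "?G x \<subseteq> {xs. length xs = s}" using Suc.prems(2) by auto
    have "(\<Sum>xs\<in>{xs\<in>F. hd xs = x}. q ^ nat (chain_exp j xs)) = (\<Sum>ys\<in>?G x. q ^ nat (chain_exp j (x # ys)))"
      unfolding eq by (subst sum.reindex) (auto simp: inj_on_def)
    also have "\<dots> = (\<Sum>ys\<in>?G x. q ^ nat \<bar>j - x\<bar> * q ^ nat (chain_exp x ys))"
      by (rule sum.cong) (auto simp: nat_add_distrib chain_exp_nonneg power_add)
    also have "\<dots> = q ^ nat \<bar>j - x\<bar> * (\<Sum>ys\<in>?G x. q ^ nat (chain_exp x ys))"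
      by (simp add: sum_distrib_left)
    also have "\<dots> \<le> q ^ nat \<bar>j - x\<bar> * ?C ^ s"
      using Suc.IH[OF fG sG, of x] q by (intro mult_left_mono) auto
    finally show "(\<Sum>xs\<in>{xs\<in>F. hd xs = x}. q ^ nat (chain_exp j xs)) \<le> q ^ nat \<bar>j - x\<bar> * ?C ^ s" .
  qed
  also have "\<dots> = (\<Sum>x\<in>?T. q ^ nat \<bar>j - x\<bar>) * ?C ^ s" by (simp add: sum_distrib_right)
  also have "\<dots> \<le> ?C * ?C ^ s"
    using geo_fin_int[OF q fT, of j] q by (intro mult_right_mono) auto
  finally show ?case by simp
qed

theorem lemma9:
  fixes p :: real and s :: nat and r :: int
  assumes "0 < p" and "p < 1" and "0 \<le> r"
  shows "chainF p s r \<le> p powr (real_of_int r / 2) * (1 / (1 - p)) ^ s * 4 ^ s"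
proof -
  define q where "q = sqrt p"
  have q: "0 \<le> q" "q < 1" "0 < q" using assms by (auto simp: q_def)
  have pq: "p = q * q" using assms by (simp add: q_def)
  let ?C = "(1 + q) / (1 - q)"
  let ?R = "p powr (real_of_int r / 2) * (1 / (1 - p)) ^ s * 4 ^ s"
  have C: "?C \<le> 4 / (1 - p)"
  proof -
    have d: "1 - p = (1 - q) * (1 + q)" by (simp add: pq algebra_simps)
    have "?C = ((1 + q) * (1 + q)) / ((1 - q) * (1 + q))" using q by simp
    then have "?C = (1 + q) ^ 2 / (1 - p)" by (simp add: d power2_eq_square)
    also have "\<dots> \<le> 4 / (1 - p)" using q assms
    proof (intro divide_right_mono)
      have "(1 + q) * (1 + q) \<le> 2 * 2" using q by (intro mult_mono) auto
      then show "(1 + q) ^ 2 \<le> 4" by (simp add: power2_eq_square)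
    qed (use assms in auto)
    finally show ?thesis .
  qed
  have Rnn: "0 \<le> ?R" using assms by auto
  have pt: "p ^ nat (chain_exp r xs) \<le> p powr (real_of_int r / 2) * q ^ nat (chain_exp r xs)" for xs
  proof -
    let ?E = "chain_exp r xs"
    have E: "r \<le> ?E" using chain_exp_ge[of r xs] assms by simp
    have E0: "0 \<le> ?E" by (rule chain_exp_nonneg)
    have h: "p powr (real_of_int ?E / 2) = q ^ nat ?E"
    proof -
      have "q = p powr (1/2)" using assms by (simp add: q_def powr_half_sqrt)
      then have "q ^ nat ?E = p powr (real (nat ?E) * (1/2))"
        using assms by (simp add: powr_realpow[symmetric] q powr_powr mult.commute)
      also have "real (nat ?E) = real_of_int ?E" using E0 by simp
      finally show ?thesis by simp
    qed
    have "p ^ nat ?E = p powr (real_of_int ?E / 2) * p powr (real_of_int ?E / 2)"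
      using assms E0 by (simp add: powr_add[symmetric] powr_realpow[symmetric])
    also have "\<dots> \<le> p powr (real_of_int r / 2) * p powr (real_of_int ?E / 2)"
      using assms E by (intro mult_right_mono powr_mono') auto
    finally show ?thesis using h by simp
  qed
  have fb: "sum (\<lambda>xs. p ^ nat (chain_exp r xs)) F \<le> ?R" if F: "finite F" "F \<subseteq> {xs. length xs = s}" for F
  proof -
    have "sum (\<lambda>xs. p ^ nat (chain_exp r xs)) F \<le> sum (\<lambda>xs. p powr (real_of_int r / 2) * q ^ nat (chain_exp r xs)) F"
      by (rule sum_mono) (rule pt)
    also have "\<dots> = p powr (real_of_int r / 2) * sum (\<lambda>xs. q ^ nat (chain_exp r xs)) F"
      by (simp add: sum_distrib_left)
    also have "\<dots> \<le> p powr (real_of_int r / 2) * ?C ^ s"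
      by (intro mult_left_mono fin_bound[OF q(1,2) F]) auto
    also have "\<dots> \<le> p powr (real_of_int r / 2) * (4 / (1 - p)) ^ s"
      using q by (intro mult_left_mono power_mono C) auto
    also have "\<dots> = ?R" by (simp add: power_divide power_one_over)
    finally show ?thesis .
  qed
  show ?thesis
  proof (cases "(\<lambda>xs. p ^ nat (chain_exp r xs)) summable_on {xs. length xs = s}")
    case True
    then show ?thesis unfolding chainF_def by (rule infsum_le_finite_sums) (rule fb)
  next
    case False
    then show ?thesis unfolding chainF_def using Rnn by (simp add: infsum_not_exists)
  qed
qed

end
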